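(* Consider the MT-model on $\mathbb{T}_d$, $d\ge2$, and let $N$ be the number of neighbours of the root that are ever informed (the number of spreaders generated by the initial spreader). Then $$\mathbb{P}(N=i)=i!\binom{d+1}{i}\frac{i}{(d+1)^{i+1}},\qquad i\in\{1,\dots,d+1\},$$ and $N\in\{1,\dots,d+1\}$ almost surely.
   Context: Let $d\ge 2$ and let $\mathbb{T}_d$ be the infinite tree in which every vertex has degree $d+1$, with root $\mathbf 0$. The MT-model on $\mathbb{T}_d$ is the continuous-time Markov process $(\eta_t)_{t\ge0}$ on $\{-1,0,1\}^{\mathbb{T}_d}$ ($-1$ = ignorant, $0$ = spreader, $1$ = stifler) in which a vertex in state $-1$ jumps to $0$ at rate equal to its number of neighbours in state $0$, and a vertex in state $0$ jumps to $1$ at rate equal to its number of neighbours in states $\{0,1\}$ (equivalently, each spreader contacts each neighbour at rate 1, informing ignorants and becoming a stifler upon contacting a non-ignorant). Initially $\eta_0(\mathbf 0)=0$ and all other vertices are in state $-1$. *)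

theory Defs
  imports "HOL-Probability.Probability"
begin

text \<open>
Graphical (Harris) construction of the MT-model on the tree T_d.
Vertices are finite lists of natural numbers: the root is [], and the
children of a vertex p are the lists c # p with c < d+1 if p is the root,
c < d otherwise (so every vertex has degree d+1).

For every ordered pair (u,w) of vertices there is an independent rate-1
Poisson clock; its successive interarrival times are omega (u,w,0),
omega (u,w,1), ... (i.i.d. Exp(1)). The ring times of this clock are the
times at which u contacts w. A spreader contacting an ignorant informs it;
a spreader contacting a non-ignorant becomes a stifler.
\<close>

type_synonym vertex = "nat list"
type_synonym sample = "vertex \<times> vertex \<times> nat \<Rightarrow> real"

definition nchildren :: "nat \<Rightarrow> vertex \<Rightarrow> nat" where
  "nchildren d v = (if v = [] then d + 1 else d)"

definition nbrs :: "nat \<Rightarrow> vertex \<Rightarrow> vertex set" where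
  "nbrs d v = {c # v | c. c < nchildren d v} \<union> (if v = [] then {} else {tl v})"

definition contacts :: "sample \<Rightarrow> vertex \<Rightarrow> vertex \<Rightarrow> real set" where
  "contacts \<omega> u w = {(\<Sum>j\<le>k. \<omega> (u, w, j)) | k. True}"

definition firstc :: "sample \<Rightarrow> vertex \<Rightarrow> vertex \<Rightarrow> ereal \<Rightarrow> ereal" where
  "firstc \<omega> u w s = Inf {ereal t | t. t \<in> contacts \<omega> u w \<and> s < ereal t}"

text \<open>Stifling time of v, given its informing time tv: the first time after tv
  at which v contacts a neighbour that is non-ignorant at that moment (its parent,
  or a child which v has already contacted, hence informed, after tv).\<close>
definition stifle :: "nat \<Rightarrow> sample \<Rightarrow> vertex \<Rightarrow> ereal \<Rightarrow> ereal" where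
  "stifle d \<omega> v tv = Inf {ereal t | t. tv < ereal t \<and>
      (\<exists>w \<in> nbrs d v. t \<in> contacts \<omega> v w \<and>
          ((v \<noteq> [] \<and> w = tl v) \<or> firstc \<omega> v w tv < ereal t))}"

text \<open>(informing time, stifling time) of each vertex; infinity means never.\<close>
fun times :: "nat \<Rightarrow> sample \<Rightarrow> vertex \<Rightarrow> ereal \<times> ereal" where
  "times d \<omega> [] = (0, stifle d \<omega> [] 0)"
| "times d \<omega> (c # p) =
     (let (tp, sp) = times d \<omega> p;
          f = firstc \<omega> p (c # p) tp;
          tv = (if f < sp then f else \<infinity>)
      in (tv, stifle d \<omega> (c # p) tv))"

text \<open>State of vertex v at time t: -1 ignorant, 0 spreader, 1 stifler.\<close>
definition eta :: "nat \<Rightarrow> sample \<Rightarrow> real \<Rightarrow> vertex \<Rightarrow> int" where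
  "eta d \<omega> t v = (if ereal t < fst (times d \<omega> v) then -1
                   else if ereal t < snd (times d \<omega> v) then 0 else 1)"

definition Ninf :: "nat \<Rightarrow> sample \<Rightarrow> nat" where
  "Ninf d \<omega> = card {w \<in> nbrs d []. \<exists>t\<ge>0. eta d \<omega> t w \<noteq> -1}"

definition MT_space :: "sample measure" where
  "MT_space = PiM UNIV (\<lambda>_. density lborel (exponential_density 1))"

end

theory Submission
  imports Defs
begin


lemma nbrs_root: "nbrs d [] = (\<lambda>c. [c]) ` {..<Suc d}"
  by (auto simp: nbrs_def nchildren_def)

lemma firstc_INF: "firstc \<omega> u w s =
  (INF k. if s < ereal (\<Sum>j\<le>k. \<omega> (u,w,j)) then ereal (\<Sum>j\<le>k. \<omega> (u,w,j)) else \<infinity>)"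
  unfolding firstc_def contacts_def
proof (rule antisym)
  show "Inf {ereal t |t. t \<in> {\<Sum>j\<le>k. \<omega> (u, w, j) |k. True} \<and> s < ereal t}
    \<le> (INF k. if s < ereal (\<Sum>j\<le>k. \<omega> (u, w, j)) then ereal (\<Sum>j\<le>k. \<omega> (u, w, j)) else \<infinity>)"
    by (rule INF_greatest) (auto intro!: Inf_lower)
  show "(INF k. if s < ereal (\<Sum>j\<le>k. \<omega> (u, w, j)) then ereal (\<Sum>j\<le>k. \<omega> (u, w, j)) else \<infinity>)
    \<le> Inf {ereal t |t. t \<in> {\<Sum>j\<le>k. \<omega> (u, w, j) |k. True} \<and> s < ereal t}"
  proof (rule Inf_greatest)
    fix x assume "x \<in> {ereal t |t. t \<in> {\<Sum>j\<le>k. \<omega> (u, w, j) |k. True} \<and> s < ereal t}"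
    then obtain k where "x = ereal (\<Sum>j\<le>k. \<omega> (u, w, j))" "s < x" by auto
    then show "(INF k. if s < ereal (\<Sum>j\<le>k. \<omega> (u, w, j)) then ereal (\<Sum>j\<le>k. \<omega> (u, w, j)) else \<infinity>) \<le> x"
      by (intro INF_lower2[of k]) auto
  qed
qed

lemma stifle_root: "stifle d \<omega> [] tv =
  (INF ck\<in>{..<Suc d} \<times> UNIV. if tv < ereal (\<Sum>j\<le>snd ck. \<omega> ([],[fst ck],j)) \<and>
       firstc \<omega> [] [fst ck] tv < ereal (\<Sum>j\<le>snd ck. \<omega> ([],[fst ck],j))
     then ereal (\<Sum>j\<le>snd ck. \<omega> ([],[fst ck],j)) else \<infinity>)"
  unfolding stifle_def contacts_def nbrs_root
proof (rule antisym)
  show "Inf {ereal t |t. tv < ereal t \<and> (\<exists>w\<in>(\<lambda>c. [c]) ` {..<Suc d}.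
        t \<in> {\<Sum>j\<le>k. \<omega> ([], w, j) |k. True} \<and> ([] \<noteq> [] \<and> w = tl [] \<or> firstc \<omega> [] w tv < ereal t))}
    \<le> (INF ck\<in>{..<Suc d} \<times> UNIV. if tv < ereal (\<Sum>j\<le>snd ck. \<omega> ([],[fst ck],j)) \<and>
       firstc \<omega> [] [fst ck] tv < ereal (\<Sum>j\<le>snd ck. \<omega> ([],[fst ck],j))
     then ereal (\<Sum>j\<le>snd ck. \<omega> ([],[fst ck],j)) else \<infinity>)"
    apply (rule INF_greatest)
    apply clarsimp
    subgoal for c k
      apply (cases "tv < ereal (\<Sum>j\<le>k. \<omega> ([], [c], j)) \<and> firstc \<omega> [] [c] tv < ereal (\<Sum>j\<le>k. \<omega> ([], [c], j))")
       apply simp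
       apply (rule Inf_lower)
       apply blast
      apply simp
      done
    done
  show "(INF ck\<in>{..<Suc d} \<times> UNIV. if tv < ereal (\<Sum>j\<le>snd ck. \<omega> ([],[fst ck],j)) \<and>
       firstc \<omega> [] [fst ck] tv < ereal (\<Sum>j\<le>snd ck. \<omega> ([],[fst ck],j))
     then ereal (\<Sum>j\<le>snd ck. \<omega> ([],[fst ck],j)) else \<infinity>) \<le>
     Inf {ereal t |t. tv < ereal t \<and> (\<exists>w\<in>(\<lambda>c. [c]) ` {..<Suc d}.
        t \<in> {\<Sum>j\<le>k. \<omega> ([], w, j) |k. True} \<and> ([] \<noteq> [] \<and> w = tl [] \<or> firstc \<omega> [] w tv < ereal t))}"
  proof (rule Inf_greatest)
    fix x assume "x \<in> {ereal t |t. tv < ereal t \<and> (\<exists>w\<in>(\<lambda>c. [c]) ` {..<Suc d}.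
        t \<in> {\<Sum>j\<le>k. \<omega> ([], w, j) |k. True} \<and> ([] \<noteq> [] \<and> w = tl [] \<or> firstc \<omega> [] w tv < ereal t))}"
    then obtain c k where "x = ereal (\<Sum>j\<le>k. \<omega> ([], [c], j))" "tv < x" "c < Suc d"
       "firstc \<omega> [] [c] tv < x" by auto
    then show "(INF ck\<in>{..<Suc d} \<times> UNIV. if tv < ereal (\<Sum>j\<le>snd ck. \<omega> ([],[fst ck],j)) \<and>
       firstc \<omega> [] [fst ck] tv < ereal (\<Sum>j\<le>snd ck. \<omega> ([],[fst ck],j))
     then ereal (\<Sum>j\<le>snd ck. \<omega> ([],[fst ck],j)) else \<infinity>) \<le> x"
      by (intro INF_lower2[of "(c,k)"]) auto
  qed
qed

lemma meas_comp[measurable]: "(\<lambda>\<omega>. \<omega> x) \<in> borel_measurable MT_space"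
  unfolding MT_space_def
  by (rule measurable_compose[OF measurable_component_singleton]) (auto simp: measurable_def)

lemma meas_firstc[measurable]: "(\<lambda>\<omega>. firstc \<omega> [] [c] 0) \<in> borel_measurable MT_space"
  unfolding firstc_INF by measurable

lemma meas_stifle[measurable]: "(\<lambda>\<omega>. stifle d \<omega> [] 0) \<in> borel_measurable MT_space"
  unfolding stifle_root
  apply (rule borel_measurable_INF)
   apply simp
  by measurable

lemma firstc_nonneg: "0 \<le> firstc \<omega> u w 0"
  unfolding firstc_def by (rule Inf_greatest) auto

lemma fst_times_child: "fst (times d \<omega> [c]) =
   (if firstc \<omega> [] [c] 0 < stifle d \<omega> [] 0 then firstc \<omega> [] [c] 0 else \<infinity>)"
  by (simp add: Let_def)

lemma informed_iff: "(\<exists>t\<ge>0. eta d \<omega> t [c] \<noteq> -1) \<longleftrightarrow> firstc \<omega> [] [c] 0 < stifle d \<omega> [] 0"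
proof
  assume "\<exists>t\<ge>0. eta d \<omega> t [c] \<noteq> -1"
  then obtain t where "eta d \<omega> t [c] \<noteq> -1" by blast
  then have "\<not> ereal t < fst (times d \<omega> [c])" by (auto simp: eta_def split: if_splits)
  then show "firstc \<omega> [] [c] 0 < stifle d \<omega> [] 0"
    unfolding fst_times_child by (auto split: if_splits)
next
  assume a: "firstc \<omega> [] [c] 0 < stifle d \<omega> [] 0"
  define f where "f = firstc \<omega> [] [c] 0"
  have f0: "0 \<le> f" unfolding f_def by (rule firstc_nonneg)
  have fi: "f \<noteq> \<infinity>" using a unfolding f_def by auto
  have "f = ereal (real_of_ereal f)" using f0 fi by (cases f) auto
  then show "\<exists>t\<ge>0. eta d \<omega> t [c] \<noteq> -1"
    using a f0 by (intro exI[of _ "real_of_ereal f"])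
       (auto simp: eta_def fst_times_child f_def[symmetric] real_of_ereal_pos)
qed

lemma Ninf_eq: "Ninf d \<omega> = card {c. c < Suc d \<and> firstc \<omega> [] [c] 0 < stifle d \<omega> [] 0}"
proof -
  have "{w \<in> nbrs d []. \<exists>t\<ge>0. eta d \<omega> t w \<noteq> -1} =
        (\<lambda>c. [c]) ` {c. c < Suc d \<and> firstc \<omega> [] [c] 0 < stifle d \<omega> [] 0}"
    unfolding nbrs_root by (auto simp: informed_iff[symmetric])
  then show ?thesis unfolding Ninf_def by (simp add: card_image inj_on_def)
qed



abbreviation Ex :: "real measure" where "Ex \<equiv> density lborel (exponential_density 1)"

lemma prob_Ex: "prob_space Ex"
  by (rule prob_space_exponential_density) simp

lemma prob_MT: "prob_space MT_space"
  unfolding MT_space_def by (intro prob_space_PiM prob_Ex)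

lemma sets_Ex[simp]: "sets Ex = sets borel" by simp

lemma meas_comp_Ex[measurable]: "(\<lambda>\<omega>. \<omega> x) \<in> measurable MT_space Ex"
  unfolding MT_space_def by (rule measurable_component_singleton) simp

lemma meas_comp_borel[measurable]: "(\<lambda>\<omega>. \<omega> x) \<in> borel_measurable MT_space"
  using meas_comp_Ex[of x] measurable_cong_sets[OF refl sets_Ex, of MT_space] by simp

lemma distr_comp: "distr MT_space Ex (\<lambda>\<omega>. \<omega> x) = Ex"
  unfolding MT_space_def by (rule distr_PiM_component) (auto intro: prob_Ex)

lemma coords_indep:
  assumes "inj_on f I" "I \<noteq> {}"
  shows "prob_space.indep_vars MT_space (\<lambda>_. Ex) (\<lambda>i \<omega>. \<omega> (f i)) I"
proof -
  interpret P: prob_space MT_space by (rule prob_MT)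
  show ?thesis
  proof (subst P.indep_vars_iff_distr_eq_PiM')
    show "distr MT_space (Pi\<^sub>M I (\<lambda>i. Ex)) (\<lambda>x. \<lambda>i\<in>I. x (f i)) = Pi\<^sub>M I (\<lambda>i. distr MT_space Ex (\<lambda>\<omega>. \<omega> (f i)))"
      unfolding distr_comp unfolding MT_space_def
      by (rule distr_PiM_reindex[where M="\<lambda>_. Ex"]) (use assms prob_Ex in auto)
  qed (use assms meas_comp_borel in auto)
qed

lemma pair_indep:
  assumes "a \<noteq> b"
  shows "prob_space.indep_var MT_space Ex (\<lambda>\<omega>. \<omega> a) Ex (\<lambda>\<omega>. \<omega> b)"
proof -
  interpret P: prob_space MT_space by (rule prob_MT)
  have "P.indep_vars (\<lambda>_. Ex) (\<lambda>i \<omega>. \<omega> ((\<lambda>t. if t then a else b) i)) UNIV"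
    by (rule coords_indep) (use assms in \<open>auto simp: inj_on_def\<close>)
  then show ?thesis
    unfolding P.indep_var_def
    by (rule iffD1[OF P.indep_vars_cong, rotated 3]) (auto split: bool.split)
qed

lemma pair_indep_borel:
  assumes "a \<noteq> b"
  shows "prob_space.indep_var MT_space borel (\<lambda>\<omega>. \<omega> a) borel (\<lambda>\<omega>. \<omega> b)"
proof -
  interpret P: prob_space MT_space by (rule prob_MT)
  have *: "sets (case_bool (borel::real measure) borel t) = sets (case_bool Ex Ex t)" for t
    by (cases t) auto
  have **: "measurable MT_space (case_bool (borel::real measure) borel t) = measurable MT_space (case_bool Ex Ex t)" for t
    by (rule measurable_cong_sets) (auto simp: *)
  show ?thesis using pair_indep[OF assms]
    unfolding P.indep_var_def P.indep_vars_def ** * .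
qed

lemma pair_distr:
  assumes "a \<noteq> b"
  shows "distr MT_space (Ex \<Otimes>\<^sub>M Ex) (\<lambda>\<omega>. (\<omega> a, \<omega> b)) = Ex \<Otimes>\<^sub>M Ex"
proof -
  interpret P: prob_space MT_space by (rule prob_MT)
  show ?thesis
    using pair_indep[OF assms] unfolding P.indep_var_distribution_eq distr_comp by simp
qed

lemma sum_erlang:
  assumes "a \<noteq> b"
  shows "distributed MT_space lborel (\<lambda>\<omega>. \<omega> a + \<omega> b) (erlang_density 1 1)"
proof -
  interpret P: prob_space MT_space by (rule prob_MT)
  have D: "distributed MT_space lborel (\<lambda>\<omega>. \<omega> x) (exponential_density 1)" for x
    unfolding distributed_def
  proof (intro conjI)
    show "distr MT_space lborel (\<lambda>\<omega>. \<omega> x) = density lborel (exponential_density 1)"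
    proof -
      have "distr MT_space lborel (\<lambda>\<omega>. \<omega> x) = distr MT_space Ex (\<lambda>\<omega>. \<omega> x)"
        by (rule distr_cong) auto
      then show ?thesis by (simp add: distr_comp)
    qed
  qed (simp_all add: meas_comp_borel)
  show ?thesis
    using P.sum_indep_erlang[OF pair_indep_borel[OF assms] _ D D] by simp
qed



abbreviation Q :: "(real \<times> real) measure" where "Q \<equiv> Ex \<Otimes>\<^sub>M Ex"

lemma Z_distr:
  assumes "0 < n"
  shows "distr MT_space (PiM {..<n} (\<lambda>_. Q)) (\<lambda>\<omega>. \<lambda>c\<in>{..<n}. (\<omega> ([],[c],0), \<omega> ([],[c],1)))
     = PiM {..<n} (\<lambda>_. Q)"
proof -
  interpret P: prob_space MT_space by (rule prob_MT)
  define f :: "nat \<times> bool \<Rightarrow> nat list \<times> nat list \<times> nat" where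
    "f = (\<lambda>(c,t). ([],[c], if t then 0 else 1))"
  have ind1: "P.indep_vars (\<lambda>_. Ex) (\<lambda>i \<omega>. \<omega> (f i)) ({..<n} \<times> UNIV)"
    by (rule coords_indep) (use assms in \<open>auto simp: inj_on_def f_def split: if_splits\<close>)
  have ind2: "P.indep_vars (\<lambda>c. PiM ({c} \<times> UNIV) (\<lambda>_. Ex))
      (\<lambda>c \<omega>. restrict (\<lambda>i. \<omega> (f i)) ({c} \<times> UNIV)) {..<n}"
    by (rule P.indep_vars_restrict[OF ind1]) (auto simp: disjoint_family_on_def)
  have ind3: "P.indep_vars (\<lambda>_. Q)
      (\<lambda>c \<omega>. (\<lambda>z. (z (c,True), z (c,False))) (restrict (\<lambda>i. \<omega> (f i)) ({c} \<times> UNIV))) {..<n}"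
    by (rule P.indep_vars_compose2[OF ind2]) measurable
  have ind4: "P.indep_vars (\<lambda>_. Q) (\<lambda>c \<omega>. (\<omega> ([],[c],0), \<omega> ([],[c],1))) {..<n}"
    by (rule iffD1[OF P.indep_vars_cong ind3]) (auto simp: f_def)
  have "distr MT_space (PiM {..<n} (\<lambda>_. Q)) (\<lambda>\<omega>. \<lambda>c\<in>{..<n}. (\<omega> ([],[c],0), \<omega> ([],[c],1)))
     = PiM {..<n} (\<lambda>c. distr MT_space Q (\<lambda>\<omega>. (\<omega> ([],[c],0), \<omega> ([],[c],1))))"
    using ind4 by (subst (asm) P.indep_vars_iff_distr_eq_PiM') (use assms in auto)
  also have "\<dots> = PiM {..<n} (\<lambda>_. Q)"
    by (rule PiM_cong) (auto simp: pair_distr)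
  finally show ?thesis .
qed



lemma Ex_gt: "emeasure Ex {s<..} = ennreal (exp (- max 0 s))"
proof -
  interpret E: prob_space Ex by (rule prob_Ex)
  have D: "distributed Ex lborel (\<lambda>x. x) (exponential_density 1)"
    unfolding distributed_def by (auto simp: distr_id2 measurable_cong_sets[OF sets_Ex refl])
  have eq: "{x \<in> space Ex. a < x} = {a<..}" for a by auto
  have g: "0 \<le> a \<Longrightarrow> measure Ex {a<..} = exp (- a)" for a
    using E.exponential_distributedD_gt[OF D, of a] by (simp add: greaterThan_def)
  show ?thesis
  proof (cases "0 \<le> s")
    case True then show ?thesis by (simp add: E.emeasure_eq_measure g)
  next
    case False
    have "measure Ex {0<..} \<le> measure Ex {s<..}"
      using False by (intro E.finite_measure_mono) auto
    then have "measure Ex {s<..} = 1" using g[of 0] E.prob_le_1[of "{s<..}"] by simp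
    then show ?thesis using False by (simp add: E.emeasure_eq_measure)
  qed
qed

lemma Q_gt: "emeasure Q {q. s < fst q} = ennreal (exp (- max 0 s))"
proof -
  interpret E: prob_space Ex by (rule prob_Ex)
  have eq: "{q. s < fst q} = {s<..} \<times> UNIV" by auto
  show ?thesis unfolding eq
    using E.emeasure_pair_measure_Times[where N=Ex and A="{s<..}" and B=UNIV] E.emeasure_space_1
    by (simp add: Ex_gt)
qed

lemma Q_mid: "emeasure Q {q. fst q < s \<and> s < fst q + snd q} = ennreal (max 0 s * exp (- s))"
proof -
  interpret E: prob_space Ex by (rule prob_Ex)
  have "{q. fst q < s \<and> s < fst q + snd q} = {q\<in>space Q. fst q < s \<and> s < fst q + snd q}"
    by (auto simp: space_pair_measure)
  also have "\<dots> \<in> sets Q" by measurable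
  finally have sets: "{q. fst q < s \<and> s < fst q + snd q} \<in> sets Q" .
  have pre: "Pair x -` {q. fst q < s \<and> s < fst q + snd q} = (if x < s then {s - x<..} else {})" for x
    by auto
  have "emeasure Q {q. fst q < s \<and> s < fst q + snd q} =
      (\<integral>\<^sup>+x. emeasure Ex (Pair x -` {q. fst q < s \<and> s < fst q + snd q}) \<partial>Ex)"
    by (rule E.emeasure_pair_measure_alt[OF sets])
  also have "\<dots> = (\<integral>\<^sup>+x. ennreal (exp (x - s)) * indicator {..<s} x \<partial>Ex)"
  proof (intro nn_integral_cong)
    fix x
    show "emeasure Ex (Pair x -` {q. fst q < s \<and> s < fst q + snd q}) = ennreal (exp (x - s)) * indicator {..<s} x"
    proof (cases "x < s")
      case True
      then have "Pair x -` {q. fst q < s \<and> s < fst q + snd q} = {s - x<..}" by auto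
      with True show ?thesis by (simp add: Ex_gt)
    next
      case False
      then have "Pair x -` {q. fst q < s \<and> s < fst q + snd q} = {}" by auto
      with False show ?thesis by simp
    qed
  qed
  also have "\<dots> = (\<integral>\<^sup>+x. ennreal (exponential_density 1 x) * (ennreal (exp (x - s)) * indicator {..<s} x) \<partial>lborel)"
    by (rule nn_integral_density) auto
  also have "\<dots> = (\<integral>\<^sup>+x. ennreal (exp (- s)) * indicator {0..<s} x \<partial>lborel)"
    by (intro nn_integral_cong)
       (auto simp: exponential_density_def ennreal_mult'[symmetric] exp_add[symmetric] split: split_indicator)
  also have "\<dots> = ennreal (exp (- s)) * emeasure lborel {0..<s}"
    by (rule nn_integral_cmult_indicator) simp
  also have "\<dots> = ennreal (max 0 s * exp (- s))"
    by (cases "0 \<le> s") (auto simp: ennreal_mult'[symmetric] mult.commute)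
  finally show ?thesis .
qed



definition Ev' :: "nat \<Rightarrow> nat set \<Rightarrow> nat \<Rightarrow> (nat \<Rightarrow> real \<times> real) set" where
  "Ev' n A v = {z \<in> space (PiM {..<n} (\<lambda>_. Q)). \<forall>w\<in>{..<n}-{v}.
     (w \<in> A \<longrightarrow> fst (z w) < fst (z v) + snd (z v) \<and> fst (z v) + snd (z v) < fst (z w) + snd (z w)) \<and>
     (w \<notin> A \<longrightarrow> fst (z v) + snd (z v) < fst (z w))}"

lemma Ev'_sets: "v < n \<Longrightarrow> Ev' n A v \<in> sets (PiM {..<n} (\<lambda>_. Q))"
  unfolding Ev'_def by measurable

lemma prod_ind: "finite W \<Longrightarrow> (\<Prod>w\<in>W. indicator (B w) (f w) :: ennreal) = (if \<forall>w\<in>W. f w \<in> B w then 1 else 0)"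
  by (induction W rule: finite_induct) (auto simp: indicator_def)


lemma Qset1: "{q::real\<times>real. fst q < s \<and> s < fst q + snd q} \<in> sets Q"
proof -
  have "{q::real\<times>real. fst q < s \<and> s < fst q + snd q} = {q\<in>space Q. fst q < s \<and> s < fst q + snd q}"
    by (auto simp: space_pair_measure)
  also have "\<dots> \<in> sets Q" by measurable
  finally show ?thesis .
qed

lemma Qset2: "{q::real\<times>real. s < fst q} \<in> sets Q"
proof -
  have "{q::real\<times>real. s < fst q} = {q\<in>space Q. s < fst q}"
    by (auto simp: space_pair_measure)
  also have "\<dots> \<in> sets Q" by measurable
  finally show ?thesis .
qed

lemma prob_Q: "prob_space Q"
  by (intro prob_space_pair prob_Ex)

lemma Ev'_measure:
  assumes A: "A \<subseteq> {..<n}" "v \<in> A" "card A = i"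
  shows "emeasure (PiM {..<n} (\<lambda>_. Q)) (Ev' n A v) = ennreal (fact i / real n ^ (i+1))"
proof -
  have n: "0 < n" "v < n" using A by auto
  have finA: "finite A" using A(1) finite_subset by blast
  have i: "1 \<le> i" "i \<le> n" using A finA card_mono[OF _ A(1)]
    by (auto simp: Suc_le_eq card_gt_0_iff)
  interpret PS: product_sigma_finite "\<lambda>_. Q"
    by (simp add: product_sigma_finite_def prob_Q prob_space_imp_sigma_finite)
  define W where "W = {..<n} - {v}"
  have ins: "{..<n} = insert v W" "v \<notin> W" "finite W" using n by (auto simp: W_def)
  define B where "B w s = (if w \<in> A then {q::real\<times>real. fst q < s \<and> s < fst q + snd q} else {q. s < fst q})" for w s
  define H where "H s = ennreal (max 0 s * exp (- s)) ^ (i - 1) * ennreal (exp (- max 0 s)) ^ (n - i)" for s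
  have B_sets: "B w s \<in> sets Q" for w s using Qset1[of s] Qset2[of s] by (auto simp: B_def)
  have EB: "emeasure Q (B w s) = (if w \<in> A then ennreal (max 0 s * exp (- s)) else ennreal (exp (- max 0 s)))" for w s
    by (simp add: B_def Q_mid Q_gt)
  have cardWA: "card (W \<inter> A) = i - 1"
  proof -
    have "W \<inter> A = A - {v}" using A by (auto simp: W_def)
    then show ?thesis using A finA by simp
  qed
  have cardWA2: "card (W \<inter> - A) = n - i"
  proof -
    have "W \<inter> - A = {..<n} - A" using A by (auto simp: W_def)
    then show ?thesis using A finA by (simp add: card_Diff_subset)
  qed
  have Hmeas[measurable]: "H \<in> borel_measurable borel" unfolding H_def by measurable
  have Ev'_sets2: "Ev' n A v \<in> sets (PiM (insert v W) (\<lambda>_. Q))"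
    using Ev'_sets[OF n(2), of A] unfolding ins(1) .
  have "emeasure (PiM {..<n} (\<lambda>_. Q)) (Ev' n A v) = (\<integral>\<^sup>+ z. indicator (Ev' n A v) z \<partial>PiM {..<n} (\<lambda>_. Q))"
    by (simp add: Ev'_sets[OF n(2)])
  also have "\<dots> = (\<integral>\<^sup>+ p. \<integral>\<^sup>+ z. indicator (Ev' n A v) (z(v:=p)) \<partial>PiM W (\<lambda>_. Q) \<partial>Q)"
    unfolding ins(1) by (rule PS.product_nn_integral_insert_rev) (use ins Ev'_sets2 in auto)
  also have "\<dots> = (\<integral>\<^sup>+ p. H (fst p + snd p) \<partial>Q)"
  proof (rule nn_integral_cong)
    fix p :: "real \<times> real"
    have "(\<integral>\<^sup>+ z. indicator (Ev' n A v) (z(v:=p)) \<partial>PiM W (\<lambda>_. Q)) =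
          (\<integral>\<^sup>+ z. (\<Prod>w\<in>W. indicator (B w (fst p + snd p)) (z w)) \<partial>PiM W (\<lambda>_. Q))"
    proof (rule nn_integral_cong)
      fix z assume z: "z \<in> space (PiM W (\<lambda>_. Q))"
      have zs: "z(v:=p) \<in> space (PiM {..<n} (\<lambda>_. Q))"
        using z ins unfolding space_PiM by (auto simp: PiE_iff space_pair_measure extensional_def)
      have "(z(v:=p) \<in> Ev' n A v) = (\<forall>w\<in>W. z w \<in> B w (fst p + snd p))"
        using zs by (auto simp: Ev'_def B_def W_def)
      then show "indicator (Ev' n A v) (z(v:=p)) = (\<Prod>w\<in>W. indicator (B w (fst p + snd p)) (z w) :: ennreal)"
        using ins(3) by (simp add: prod_ind[OF ins(3)] indicator_def)
    qed
    also have "\<dots> = (\<Prod>w\<in>W. \<integral>\<^sup>+ q. indicator (B w (fst p + snd p)) q \<partial>Q)"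
      by (rule PS.product_nn_integral_prod) (use ins in \<open>auto intro!: borel_measurable_indicator B_sets\<close>)
    also have "\<dots> = (\<Prod>w\<in>W. emeasure Q (B w (fst p + snd p)))"
      by (intro prod.cong refl nn_integral_indicator B_sets)
    also have "\<dots> = H (fst p + snd p)"
      unfolding EB prod.If_cases[OF ins(3)] H_def by (simp add: cardWA cardWA2)
    finally show "(\<integral>\<^sup>+ z. indicator (Ev' n A v) (z(v:=p)) \<partial>PiM W (\<lambda>_. Q)) = H (fst p + snd p)" .
  qed
  also have "\<dots> = (\<integral>\<^sup>+ p. H (fst p + snd p) \<partial>distr MT_space Q (\<lambda>\<omega>. (\<omega> ([],[v],0), \<omega> ([],[v],1))))"
    by (simp add: pair_distr)
  also have "\<dots> = (\<integral>\<^sup>+ \<omega>. H (\<omega> ([],[v],0) + \<omega> ([],[v],1)) \<partial>MT_space)"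
    by (subst nn_integral_distr) auto
  also have "\<dots> = (\<integral>\<^sup>+ t. H t \<partial>distr MT_space lborel (\<lambda>\<omega>. \<omega> ([],[v],0) + \<omega> ([],[v],1)))"
    by (subst nn_integral_distr) auto
  also have "\<dots> = (\<integral>\<^sup>+ t. H t \<partial>density lborel (erlang_density 1 1))"
    using sum_erlang[of "([],[v],0)" "([],[v],1)"] by (simp add: distributed_def)
  also have "\<dots> = (\<integral>\<^sup>+ t. ennreal (erlang_density 1 1 t) * H t \<partial>lborel)"
    by (rule nn_integral_density) auto
  also have "\<dots> = (\<integral>\<^sup>+ t. ennreal (1 / real n) * ennreal (erlang_density 0 (real n) t * t ^ i) \<partial>lborel)"
  proof (rule nn_integral_cong)
    fix t :: real
    show "ennreal (erlang_density 1 1 t) * H t = ennreal (1 / real n) * ennreal (erlang_density 0 (real n) t * t ^ i)"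
    proof (cases "0 \<le> t")
      case False then show ?thesis by (simp add: erlang_density_def H_def)
    next
      case True
      obtain k where k: "i = Suc k" using i by (cases i) auto
      have e: "exp (- t) ^ m = exp (- (real m * t))" for m
        by (simp add: exp_of_nat_mult[symmetric])
      have H0: "H t = ennreal ((t * exp (- t)) ^ k) * ennreal (exp (- t) ^ (n - i))"
        using True by (simp add: H_def k ennreal_power)
      have H: "H t = ennreal ((t * exp (- t)) ^ k * exp (- t) ^ (n - i))"
        unfolding H0 by (rule ennreal_mult[symmetric]) (use True in auto)
      have Er: "erlang_density 1 1 t = t * exp (- t)" using True by (simp add: erlang_density_def)
      have "ennreal (erlang_density 1 1 t) * H t =
            ennreal ((t * exp (- t)) * ((t * exp (- t)) ^ k * exp (- t) ^ (n - i)))"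
        unfolding H Er by (rule ennreal_mult[symmetric]) (use True in auto)
      also have "(t * exp (- t)) * ((t * exp (- t)) ^ k * exp (- t) ^ (n - i)) = t ^ i * exp (- t) ^ n"
      proof -
        have "(t * exp (- t)) * ((t * exp (- t)) ^ k * exp (- t) ^ (n - i)) = t ^ i * (exp (- t) ^ i * exp (- t) ^ (n - i))"
          by (simp add: k power_mult_distrib algebra_simps)
        also have "exp (- t) ^ i * exp (- t) ^ (n - i) = exp (- t) ^ n"
          using i by (simp add: power_add[symmetric])
        finally show ?thesis .
      qed
      also have "\<dots> = 1 / real n * (erlang_density 0 (real n) t * t ^ i)"
        using True n by (simp add: erlang_density_def e field_simps)
      finally have X: "ennreal (erlang_density 1 1 t) * H t = ennreal (1 / real n * (erlang_density 0 (real n) t * t ^ i))" .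
      show ?thesis unfolding X by (rule ennreal_mult) (use True in auto)
    qed
  qed
  also have "\<dots> = ennreal (1 / real n) * (\<integral>\<^sup>+ t. ennreal (erlang_density 0 (real n) t * t ^ i) \<partial>lborel)"
    by (rule nn_integral_cmult) auto
  also have "\<dots> = ennreal (1 / real n) * ennreal (fact i / real n ^ i)"
    using n by (subst nn_integral_erlang_ith_moment) auto
  also have "\<dots> = ennreal (fact i / real n ^ (i+1))"
    using n by (simp add: ennreal_mult''[symmetric] field_simps)
  finally show ?thesis .
qed



definition Gset :: "(nat list \<times> nat list \<times> nat \<Rightarrow> real) set" where
  "Gset = {\<omega> \<in> space MT_space. \<forall>x. 0 < \<omega> x}"

definition Zf :: "nat \<Rightarrow> (nat list \<times> nat list \<times> nat \<Rightarrow> real) \<Rightarrow> (nat \<Rightarrow> real \<times> real)" where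
  "Zf n \<omega> = (\<lambda>c\<in>{..<n}. (\<omega> ([],[c],0), \<omega> ([],[c],1)))"

definition Ev :: "nat \<Rightarrow> nat set \<Rightarrow> nat \<Rightarrow> (nat list \<times> nat list \<times> nat \<Rightarrow> real) set" where
  "Ev n A v = Zf n -` Ev' n A v \<inter> space MT_space"

lemma Ev_iff:
  assumes "v < n"
  shows "\<omega> \<in> Ev n A v \<longleftrightarrow> \<omega> \<in> space MT_space \<and> (\<forall>w\<in>{..<n}-{v}.
     (w \<in> A \<longrightarrow> \<omega> ([],[w],0) < \<omega> ([],[v],0) + \<omega> ([],[v],1) \<and>
        \<omega> ([],[v],0) + \<omega> ([],[v],1) < \<omega> ([],[w],0) + \<omega> ([],[w],1)) \<and>
     (w \<notin> A \<longrightarrow> \<omega> ([],[v],0) + \<omega> ([],[v],1) < \<omega> ([],[w],0)))"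
  using assms by (auto simp: Ev_def Ev'_def Zf_def space_PiM space_pair_measure)

lemma firstc_pos:
  fixes \<omega> :: "nat list \<times> nat list \<times> nat \<Rightarrow> real"
  assumes "\<forall>j. 0 < \<omega> (u,w,j)"
  shows "firstc \<omega> u w 0 = ereal (\<omega> (u,w,0))"
proof -
  have pos: "0 < (\<Sum>j\<le>k. \<omega> (u,w,j))" for k
    using assms by (intro sum_pos) auto
  have ge: "\<omega> (u,w,0) \<le> (\<Sum>j\<le>k. \<omega> (u,w,j))" for k
  proof -
    have "(\<Sum>j\<le>0. \<omega> (u,w,j)) \<le> (\<Sum>j\<le>k. \<omega> (u,w,j))"
      using assms by (intro sum_mono2) (auto intro: less_imp_le)
    then show ?thesis by simp
  qed
  show ?thesis unfolding firstc_INF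
  proof (rule antisym)
    show "(INF k. if 0 < ereal (\<Sum>j\<le>k. \<omega> (u, w, j)) then ereal (\<Sum>j\<le>k. \<omega> (u, w, j)) else \<infinity>)
      \<le> ereal (\<omega> (u, w, 0))"
      using pos[of 0] by (intro INF_lower2[of 0]) auto
    show "ereal (\<omega> (u, w, 0)) \<le> (INF k. if 0 < ereal (\<Sum>j\<le>k. \<omega> (u, w, j)) then ereal (\<Sum>j\<le>k. \<omega> (u, w, j)) else \<infinity>)"
      by (rule INF_greatest) (use pos ge in auto)
  qed
qed

lemma psum_ge:
  fixes \<omega> :: "nat list \<times> nat list \<times> nat \<Rightarrow> real" and k :: nat
  assumes "\<forall>j. 0 < \<omega> (u,w,j)" "1 \<le> k"
  shows "\<omega> (u,w,0) + \<omega> (u,w,1) \<le> (\<Sum>j\<le>k. \<omega> (u,w,j))"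
proof -
  have "(\<Sum>j\<le>1. \<omega> (u,w,j)) \<le> (\<Sum>j\<le>k. \<omega> (u,w,j))"
    using assms by (intro sum_mono2) (auto intro: less_imp_le)
  then show ?thesis by (simp add: atMost_Suc)
qed

lemma psum_0_less:
  fixes \<omega> :: "nat list \<times> nat list \<times> nat \<Rightarrow> real" and k :: nat
  assumes "\<forall>j. 0 < \<omega> (u,w,j)" "\<omega> (u,w,0) < (\<Sum>j\<le>k. \<omega> (u,w,j))"
  shows "1 \<le> k"
  using assms by (cases k) auto

lemma stifle_Ev:
  assumes G: "\<omega> \<in> Gset" and E: "\<omega> \<in> Ev (Suc d) A v" and v: "v < Suc d"
  shows "stifle d \<omega> [] 0 = ereal (\<omega> ([],[v],0) + \<omega> ([],[v],1))"
proof -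
  let ?S = "\<lambda>c. \<omega> ([],[c],0) + \<omega> ([],[c],1)"
  have pos: "\<forall>j. 0 < \<omega> (u,w,j)" for u w using G by (auto simp: Gset_def)
  have fc: "firstc \<omega> [] [c] 0 = ereal (\<omega> ([],[c],0))" for c by (rule firstc_pos[OF pos])
  have Sle: "?S v \<le> ?S c" if "c < Suc d" for c
  proof (cases "c = v")
    case False
    have p: "0 < \<omega> ([],[c],1)" using pos by auto
    have "\<forall>w\<in>{..<Suc d}-{v}. (w \<in> A \<longrightarrow> \<omega> ([],[w],0) < ?S v \<and> ?S v < ?S w) \<and> (w \<notin> A \<longrightarrow> ?S v < \<omega> ([],[w],0))"
      using E Ev_iff[OF v] by simp
    then have "(c \<in> A \<longrightarrow> \<omega> ([],[c],0) < ?S v \<and> ?S v < ?S c) \<and> (c \<notin> A \<longrightarrow> ?S v < \<omega> ([],[c],0))"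
      using that False by blast
    then show ?thesis using p by (cases "c \<in> A") auto
  qed simp
  have key: "\<forall>c<Suc d. \<forall>k. \<omega> ([],[c],0) < (\<Sum>j\<le>k. \<omega> ([],[c],j)) \<longrightarrow> ?S v \<le> (\<Sum>j\<le>k. \<omega> ([],[c],j))"
  proof (intro allI impI)
    fix c k assume c: "c < Suc d" and lt: "\<omega> ([],[c],0) < (\<Sum>j\<le>k. \<omega> ([],[c],j))"
    from lt have "1 \<le> k" by (rule psum_0_less[OF pos])
    then have "?S c \<le> (\<Sum>j\<le>k. \<omega> ([],[c],j))" by (rule psum_ge[OF pos])
    then show "?S v \<le> (\<Sum>j\<le>k. \<omega> ([],[c],j))" using Sle[OF c] by auto
  qed
  show ?thesis unfolding stifle_root fc
  proof (rule antisym)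
    show "(INF ck\<in>{..<Suc d} \<times> UNIV. if 0 < ereal (\<Sum>j\<le>snd ck. \<omega> ([],[fst ck],j)) \<and>
       ereal (\<omega> ([],[fst ck],0)) < ereal (\<Sum>j\<le>snd ck. \<omega> ([],[fst ck],j))
     then ereal (\<Sum>j\<le>snd ck. \<omega> ([],[fst ck],j)) else \<infinity>) \<le> ereal (?S v)"
      using v pos[of "[]" "[v]", THEN spec, of 0] pos[of "[]" "[v]", THEN spec, of 1]
      by (intro INF_lower2[of "(v,1)"]) (auto simp: atMost_Suc)
    show "ereal (?S v) \<le> (INF ck\<in>{..<Suc d} \<times> UNIV. if 0 < ereal (\<Sum>j\<le>snd ck. \<omega> ([],[fst ck],j)) \<and>
       ereal (\<omega> ([],[fst ck],0)) < ereal (\<Sum>j\<le>snd ck. \<omega> ([],[fst ck],j))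
     then ereal (\<Sum>j\<le>snd ck. \<omega> ([],[fst ck],j)) else \<infinity>)"
      using key by (intro INF_greatest) auto
  qed
qed

lemma Ninf_Ev:
  assumes G: "\<omega> \<in> Gset" and E: "\<omega> \<in> Ev (Suc d) A v" and A: "A \<subseteq> {..<Suc d}" "v \<in> A"
  shows "Ninf d \<omega> = card A"
proof -
  have v: "v < Suc d" using A by auto
  have pos: "\<forall>j. 0 < \<omega> (u,w,j)" for u w using G by (auto simp: Gset_def)
  have fc: "firstc \<omega> [] [c] 0 = ereal (\<omega> ([],[c],0))" for c by (rule firstc_pos[OF pos])
  have "{c. c < Suc d \<and> firstc \<omega> [] [c] 0 < stifle d \<omega> [] 0} = A"
  proof (intro set_eqI iffI)
    fix c assume "c \<in> {c. c < Suc d \<and> firstc \<omega> [] [c] 0 < stifle d \<omega> [] 0}"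
    then have c: "c < Suc d" "\<omega> ([],[c],0) < \<omega> ([],[v],0) + \<omega> ([],[v],1)"
      unfolding fc stifle_Ev[OF G E v] by auto
    show "c \<in> A"
    proof (rule ccontr)
      assume "c \<notin> A"
      with A c E show False unfolding Ev_iff[OF v] by (auto dest!: bspec[of _ _ c])
    qed
  next
    fix c assume c: "c \<in> A"
    show "c \<in> {c. c < Suc d \<and> firstc \<omega> [] [c] 0 < stifle d \<omega> [] 0}"
    proof (cases "c = v")
      case True then show ?thesis using v pos[of "[]" "[v]", THEN spec, of 1] unfolding fc stifle_Ev[OF G E v] by auto
    next
      case False then show ?thesis
        using c A E unfolding fc stifle_Ev[OF G E v] Ev_iff[OF v] by auto
    qed
  qed
  then show ?thesis by (simp add: Ninf_eq)
qed

lemma Ev_disj: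
  assumes G: "\<omega> \<in> Gset" and E: "\<omega> \<in> Ev (Suc d) A v" "\<omega> \<in> Ev (Suc d) A' v'"
    and A: "A \<subseteq> {..<Suc d}" "v \<in> A" "A' \<subseteq> {..<Suc d}" "v' \<in> A'"
  shows "A = A' \<and> v = v'"
proof -
  have v: "v < Suc d" "v' < Suc d" using A by auto
  have pos: "\<forall>j. 0 < \<omega> (u,w,j)" for u w using G by (auto simp: Gset_def)
  let ?S = "\<lambda>c. \<omega> ([],[c],0) + \<omega> ([],[c],1)"
  have lt: "?S v < ?S c" if "\<omega> \<in> Ev (Suc d) A v" "c < Suc d" "c \<noteq> v" "v < Suc d" for A v c
  proof -
    have p: "0 < \<omega> ([],[c],1)" using pos by auto
    have "\<forall>w\<in>{..<Suc d}-{v}. (w \<in> A \<longrightarrow> \<omega> ([],[w],0) < ?S v \<and> ?S v < ?S w) \<and> (w \<notin> A \<longrightarrow> ?S v < \<omega> ([],[w],0))"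
      using that(1) Ev_iff[OF that(4)] by simp
    then have "(c \<in> A \<longrightarrow> \<omega> ([],[c],0) < ?S v \<and> ?S v < ?S c) \<and> (c \<notin> A \<longrightarrow> ?S v < \<omega> ([],[c],0))"
      using that(2,3) by blast
    then show ?thesis using p by (cases "c \<in> A") auto
  qed
  have "v = v'"
  proof (rule ccontr)
    assume "v \<noteq> v'"
    then show False using lt[OF E(1) v(2) _ v(1)] lt[OF E(2) v(1) _ v(2)] by auto
  qed
  have AA: "A = {c. c < Suc d \<and> firstc \<omega> [] [c] 0 < stifle d \<omega> [] 0}" if "\<omega> \<in> Ev (Suc d) A v" "A \<subseteq> {..<Suc d}" "v \<in> A" for A v
  proof -
    have vv: "v < Suc d" using that by auto
    have fc: "firstc \<omega> [] [c] 0 = ereal (\<omega> ([],[c],0))" for c by (rule firstc_pos[OF pos])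
    show ?thesis
    proof (intro set_eqI iffI)
      fix c assume c: "c \<in> A"
      show "c \<in> {c. c < Suc d \<and> firstc \<omega> [] [c] 0 < stifle d \<omega> [] 0}"
      proof (cases "c = v")
        case True then show ?thesis using vv pos[of "[]" "[v]", THEN spec, of 1] unfolding fc stifle_Ev[OF G that(1) vv] by auto
      next
        case False then show ?thesis
          using c that unfolding fc stifle_Ev[OF G that(1) vv] Ev_iff[OF vv] by auto
      qed
    next
      fix c assume "c \<in> {c. c < Suc d \<and> firstc \<omega> [] [c] 0 < stifle d \<omega> [] 0}"
      then have c: "c < Suc d" "\<omega> ([],[c],0) < \<omega> ([],[v],0) + \<omega> ([],[v],1)"
        unfolding fc stifle_Ev[OF G that(1) vv] by auto
      show "c \<in> A"
      proof (rule ccontr)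
        assume "c \<notin> A"
        with that c show False unfolding Ev_iff[OF vv] by (auto dest!: bspec[of _ _ c])
      qed
    qed
  qed
  show ?thesis using AA[OF E(1) A(1,2)] AA[OF E(2) A(3,4)] \<open>v = v'\<close> by simp
qed



lemma meas_Ninf: "{\<omega> \<in> space MT_space. Ninf d \<omega> = i} \<in> sets MT_space"
proof -
  let ?P = "\<lambda>c \<omega>. firstc \<omega> [] [c] 0 < stifle d \<omega> [] 0"
  have "{\<omega> \<in> space MT_space. Ninf d \<omega> = i} =
     (\<Union>B\<in>{B. B \<subseteq> {..<Suc d} \<and> card B = i}. {\<omega> \<in> space MT_space. \<forall>c\<in>{..<Suc d}. ?P c \<omega> = (c \<in> B)})"
  proof (intro set_eqI iffI)
    fix \<omega> assume "\<omega> \<in> {\<omega> \<in> space MT_space. Ninf d \<omega> = i}"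
    then show "\<omega> \<in> (\<Union>B\<in>{B. B \<subseteq> {..<Suc d} \<and> card B = i}. {\<omega> \<in> space MT_space. \<forall>c\<in>{..<Suc d}. ?P c \<omega> = (c \<in> B)})"
      by (intro UN_I[of "{c. c < Suc d \<and> ?P c \<omega>}"]) (auto simp: Ninf_eq)
  next
    fix \<omega> assume "\<omega> \<in> (\<Union>B\<in>{B. B \<subseteq> {..<Suc d} \<and> card B = i}. {\<omega> \<in> space MT_space. \<forall>c\<in>{..<Suc d}. ?P c \<omega> = (c \<in> B)})"
    then obtain B where B: "B \<subseteq> {..<Suc d}" "card B = i" "\<omega> \<in> space MT_space" "\<forall>c\<in>{..<Suc d}. ?P c \<omega> = (c \<in> B)"
      by auto
    then have "{c. c < Suc d \<and> ?P c \<omega>} = B" by auto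
    then show "\<omega> \<in> {\<omega> \<in> space MT_space. Ninf d \<omega> = i}" using B by (simp add: Ninf_eq)
  qed
  also have "\<dots> \<in> sets MT_space"
  proof (rule sets.finite_UN)
    show "finite {B. B \<subseteq> {..<Suc d} \<and> card B = i}" by simp
  next
    fix B show "{\<omega> \<in> space MT_space. \<forall>c\<in>{..<Suc d}. ?P c \<omega> = (c \<in> B)} \<in> sets MT_space"
      by measurable
  qed
  finally show ?thesis .
qed

lemma Gset_sets: "Gset \<in> sets MT_space"
  unfolding Gset_def by measurable

lemma AE_G: "AE \<omega> in MT_space. \<omega> \<in> Gset"
proof -
  have Ex_pos: "AE x in Ex. 0 < x"
  proof (subst Nonnegative_Lebesgue_Integration.AE_density)
    show "AE x in lborel. 0 < ennreal (exponential_density 1 x) \<longrightarrow> 0 < x"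
      using AE_lborel_singleton[of 0] by eventually_elim (auto simp: exponential_density_def)
  qed simp
  have "AE \<omega> in MT_space. \<forall>x. 0 < \<omega> x"
    unfolding AE_all_countable
  proof
    fix x show "AE \<omega> in MT_space. 0 < \<omega> x"
      unfolding MT_space_def by (rule AE_PiM_component[OF prob_Ex]) (auto intro: Ex_pos)
  qed
  moreover have "AE \<omega> in MT_space. \<omega> \<in> space MT_space" by (rule AE_space)
  ultimately show ?thesis by eventually_elim (auto simp: Gset_def)
qed

lemma Zf_meas[measurable]: "Zf n \<in> measurable MT_space (PiM {..<n} (\<lambda>_. Q))"
  unfolding Zf_def by measurable

lemma Ev_sets: "v < n \<Longrightarrow> Ev n A v \<in> sets MT_space"
  unfolding Ev_def by (rule measurable_sets[OF Zf_meas Ev'_sets])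

lemma Ev_measure:
  assumes A: "A \<subseteq> {..<n}" "v \<in> A" "card A = i"
  shows "measure MT_space (Ev n A v) = fact i / real n ^ (i+1)"
proof -
  interpret P: prob_space MT_space by (rule prob_MT)
  have n: "0 < n" "v < n" using A by auto
  have "emeasure MT_space (Ev n A v) = emeasure (distr MT_space (PiM {..<n} (\<lambda>_. Q)) (Zf n)) (Ev' n A v)"
    unfolding Ev_def by (rule emeasure_distr[symmetric]) (auto intro: Ev'_sets n)
  also have "distr MT_space (PiM {..<n} (\<lambda>_. Q)) (Zf n) = PiM {..<n} (\<lambda>_. Q)"
    unfolding Zf_def by (rule Z_distr[OF n(1)])
  also have "emeasure (PiM {..<n} (\<lambda>_. Q)) (Ev' n A v) = ennreal (fact i / real n ^ (i+1))"
    by (rule Ev'_measure[OF A])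
  finally show ?thesis by (simp add: P.emeasure_eq_measure)
qed

lemma sum_target:
  assumes n: "0 < n"
  shows "(\<Sum>i\<in>{1..n}. fact i * real (n choose i) * real i / real n ^ (i+1)) = (1::real)"
proof -
  define b where "b i = fact i * real (n choose i) / real n ^ i" for i
  have nat_id: "Suc i * (n choose Suc i) = (n - i) * (n choose i)" for i
    by (metis binomial_absorption binomial_absorb_comp)
  have rec: "b (Suc i) = b i * real (n - i) / real n" for i
  proof -
    have "fact (Suc i) * real (n choose Suc i) = fact i * real (Suc i * (n choose Suc i))"
      by (simp add: algebra_simps)
    also have "\<dots> = fact i * real (n choose i) * real (n - i)"
      unfolding nat_id of_nat_mult by (simp only: mult_ac)
    finally show ?thesis using n by (simp add: b_def field_simps)
  qed
  have trm: "fact i * real (n choose i) * real i / real n ^ (i+1) = b i - b (Suc i)" if "i \<le> n" for i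
  proof -
    have rni: "real (n - i) = real n - real i" using that by (simp add: of_nat_diff)
    have "b i - b (Suc i) = b i - b i * (real n - real i) / real n"
      unfolding rec rni ..
    also have "\<dots> = b i * real i / real n"
      using n by (simp add: field_simps)
    finally have "b i - b (Suc i) = b i * real i / real n" .
    then show ?thesis using n by (simp add: b_def field_simps)
  qed
  have "(\<Sum>i\<in>{1..n}. fact i * real (n choose i) * real i / real n ^ (i+1)) = (\<Sum>i\<in>{1..n}. b i - b (Suc i))"
    by (intro sum.cong refl trm) auto
  also have "\<dots> = - (\<Sum>i = 1..n. b (Suc i) - b i)"
    by (simp add: sum_negf[symmetric])
  also have "\<dots> = b 1 - b (Suc n)"
    using n by (subst sum_Suc_diff) auto
  also have "\<dots> = 1" using n by (simp add: b_def)
  finally show ?thesis .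
qed



theorem lemma1:
  fixes d :: nat
  assumes "d \<ge> 2"
  shows "(\<forall>i \<in> {1..d+1}.
            measure MT_space {\<omega> \<in> space MT_space. Ninf d \<omega> = i}
              = fact i * real ((d + 1) choose i) * real i / real (d + 1) ^ (i + 1))
         \<and> (AE \<omega> in MT_space. Ninf d \<omega> \<in> {1..d+1})"
proof -
  interpret P: prob_space MT_space by (rule prob_MT)
  define n where "n = Suc d"
  have dn: "d + 1 = n" by (simp add: n_def)
  have n0: "0 < n" by (simp add: n_def)
  define t where "t i = fact i * real (n choose i) * real i / real n ^ (i+1)" for i
  define m where "m i = measure MT_space {\<omega> \<in> space MT_space. Ninf d \<omega> = i}" for i
  have lower: "t i \<le> m i" if i: "i \<in> {1..n}" for i
  proof -
    define Fam where "Fam = Sigma {A. A \<subseteq> {..<n} \<and> card A = i} (\<lambda>A. A)"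
    define F where "F p = Ev n (fst p) (snd p) \<inter> Gset" for p
    have finS: "finite {A. A \<subseteq> {..<n} \<and> card A = i}" by simp
    have finFam: "finite Fam" unfolding Fam_def
      by (rule finite_SigmaI[OF finS]) (auto intro: finite_subset)
    have inFam: "fst p \<subseteq> {..<n}" "snd p \<in> fst p" "card (fst p) = i" if "p \<in> Fam" for p
      using that by (auto simp: Fam_def)
    have Fsets: "F ` Fam \<subseteq> sets MT_space"
    proof
      fix x assume "x \<in> F ` Fam"
      then obtain p where p: "p \<in> Fam" "x = F p" by auto
      then have "snd p < n" using inFam[OF p(1)] by auto
      then show "x \<in> sets MT_space" using p by (auto simp: F_def intro!: Ev_sets Gset_sets)
    qed
    have disj: "disjoint_family_on F Fam"
    unfolding disjoint_family_on_def
    proof (intro ballI impI)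
      fix p q assume pq: "p \<in> Fam" "q \<in> Fam" "p \<noteq> q"
      show "F p \<inter> F q = {}"
      proof (rule ccontr)
        assume "F p \<inter> F q \<noteq> {}"
        then obtain \<omega> where w: "\<omega> \<in> Gset" "\<omega> \<in> Ev (Suc d) (fst p) (snd p)" "\<omega> \<in> Ev (Suc d) (fst q) (snd q)"
          by (auto simp: F_def n_def)
        have "fst p = fst q \<and> snd p = snd q"
          by (rule Ev_disj[OF w]) (use inFam[OF pq(1)] inFam[OF pq(2)] in \<open>auto simp: n_def\<close>)
        then show False using pq(3) by (simp add: prod_eq_iff)
      qed
    qed
    have sub: "(\<Union>(F ` Fam)) \<subseteq> {\<omega> \<in> space MT_space. Ninf d \<omega> = i}"
    proof
      fix \<omega> assume "\<omega> \<in> \<Union>(F ` Fam)"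
      then obtain p where p: "p \<in> Fam" "\<omega> \<in> Gset" "\<omega> \<in> Ev (Suc d) (fst p) (snd p)"
        by (auto simp: F_def n_def)
      have "Ninf d \<omega> = card (fst p)"
        by (rule Ninf_Ev[OF p(2,3)]) (use inFam[OF p(1)] in \<open>auto simp: n_def\<close>)
      then show "\<omega> \<in> {\<omega> \<in> space MT_space. Ninf d \<omega> = i}"
        using inFam[OF p(1)] p(2) by (auto simp: Gset_def)
    qed
    have mF: "measure MT_space (F p) = fact i / real n ^ (i+1)" if p: "p \<in> Fam" for p
    proof -
      have sv: "snd p < n" using inFam[OF p] by auto
      have "measure MT_space (F p) = measure MT_space (Ev n (fst p) (snd p))"
        unfolding F_def
        by (rule measure_eq_AE) (use AE_G sv in \<open>auto intro: Ev_sets Gset_sets\<close>)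
      also have "\<dots> = fact i / real n ^ (i+1)"
        by (rule Ev_measure) (use inFam[OF p] in auto)
      finally show ?thesis .
    qed
    have cardFam: "card Fam = (n choose i) * i"
    proof -
      have "card Fam = (\<Sum>A\<in>{A. A \<subseteq> {..<n} \<and> card A = i}. card A)"
        unfolding Fam_def by (rule card_SigmaI[OF finS]) (auto intro: finite_subset)
      also have "\<dots> = (\<Sum>A\<in>{A. A \<subseteq> {..<n} \<and> card A = i}. i)" by (rule sum.cong) auto
      also have "\<dots> = (n choose i) * i" by (simp add: n_subsets)
      finally show ?thesis .
    qed
    have "measure MT_space (\<Union>(F ` Fam)) = (\<Sum>p\<in>Fam. measure MT_space (F p))"
      by (rule P.finite_measure_finite_Union[OF finFam Fsets disj])
    also have "\<dots> = (\<Sum>p\<in>Fam. fact i / real n ^ (i+1))" by (rule sum.cong) (auto simp: mF)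
    also have "\<dots> = t i" by (simp add: cardFam t_def)
    finally have "measure MT_space (\<Union>(F ` Fam)) = t i" .
    moreover have "measure MT_space (\<Union>(F ` Fam)) \<le> m i"
      unfolding m_def by (rule P.finite_measure_mono[OF sub meas_Ninf])
    ultimately show ?thesis by simp
  qed
  define U where "U = (\<Union>i\<in>{1..n}. {\<omega> \<in> space MT_space. Ninf d \<omega> = i})"
  have mU: "measure MT_space U = (\<Sum>i\<in>{1..n}. m i)"
    unfolding U_def m_def
    by (rule P.finite_measure_finite_Union) (auto simp: meas_Ninf disjoint_family_on_def)
  have st: "(\<Sum>i\<in>{1..n}. t i) = 1" unfolding t_def by (rule sum_target[OF n0])
  have eq: "m i = t i" if "i \<in> {1..n}" for i
  proof (rule ccontr)
    assume "m i \<noteq> t i"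
    with lower[OF that] have "t i < m i" by simp
    then have "(\<Sum>i\<in>{1..n}. t i) < (\<Sum>i\<in>{1..n}. m i)"
      using that lower by (intro sum_strict_mono_ex1) auto
    then show False using st mU P.prob_le_1[of U] by simp
  qed
  have "measure MT_space U = 1" using mU st eq by simp
  then have "AE \<omega> in MT_space. \<omega> \<in> U" by (rule P.AE_prob_1)
  then have AE: "AE \<omega> in MT_space. Ninf d \<omega> \<in> {1..d+1}"
    by eventually_elim (auto simp: U_def n_def)
  show ?thesis using eq AE unfolding dn m_def t_def by auto
qed

end
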